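(* $\mathbb{Y}_{\tt k}\subseteq\Theta_{\tt k}$; that is, for every $w\in S_n^{\tt k}$, the inversion set $\{(a,b)\in\Omega_{GL_n}: w(a)>w(b)\}$ is a ${\tt k}$-diagram.
   Context: Fix $n$ and ${\tt k}=\{k_1<\dots<k_{d-1}\}$ with $0<k_1<\dots<k_{d-1}<n$; set $k_0=0$, $k_d=n$, $I_i=[k_{i-1}+1,k_i]$. $S_n^{\tt k}$ is the set of $w\in S_n$ whose descents lie in ${\tt k}$, and $\mathbb{Y}_{\tt k}$ is the set of their inversion sets. $\Omega_{GL_n}=\{(a,b):1\le a<b\le n\}$ ordered by $(a',b')\preceq(a,b)$ iff $a\le a'$ and $b'\le b$; regions $\Lambda^{ij}_{\tt k}=I_i\times I_j$ for $i<j$. $S\subseteq\Omega_{GL_n}$ is a ${\tt k}$-diagram if $S\cap\Lambda^{ij}_{\tt k}$ is a lower order ideal of $\Lambda^{ij}_{\tt k}$ for every $i<j$, and for each $(a,b)$, with hook $H(a,b)=\{(a,l):a<l<b\}\cup\{(j,b):a<j<b\}$: if more than half of $H(a,b)$ lies in $S$ then $(a,b)\in S$, and if more than half lies outside $S$ then $(a,b)\notin S$. $\Theta_{\tt k}$ is the set of ${\tt k}$-diagrams. *)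

theory Defs
  imports "HOL-Combinatorics.Permutations"
begin

text \<open>The composition data k = {k_1 < ... < k_{d-1}} is a finite set K of naturals
with 0 < k_i < n. We set k_0 = 0, k_d = n.\<close>

definition kseq :: "nat \<Rightarrow> nat set \<Rightarrow> nat \<Rightarrow> nat" where
  "kseq n K i = (0 # sorted_list_of_set K @ [n]) ! i"

definition kd :: "nat set \<Rightarrow> nat" where
  "kd K = card K + 1"

definition kblock :: "nat \<Rightarrow> nat set \<Rightarrow> nat \<Rightarrow> nat set" where
  "kblock n K i = {kseq n K (i - 1) + 1 .. kseq n K i}"

definition Omega :: "nat \<Rightarrow> (nat \<times> nat) set" where
  "Omega n = {(a, b). 1 \<le> a \<and> a < b \<and> b \<le> n}"

definition omega_le :: "nat \<times> nat \<Rightarrow> nat \<times> nat \<Rightarrow> bool" where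
  "omega_le p q \<longleftrightarrow> fst q \<le> fst p \<and> snd p \<le> snd q"

definition Lambda :: "nat \<Rightarrow> nat set \<Rightarrow> nat \<Rightarrow> nat \<Rightarrow> (nat \<times> nat) set" where
  "Lambda n K i j = kblock n K i \<times> kblock n K j"

definition lower_ideal :: "(nat \<times> nat) set \<Rightarrow> (nat \<times> nat) set \<Rightarrow> bool" where
  "lower_ideal T P \<longleftrightarrow> T \<subseteq> P \<and> (\<forall>x\<in>T. \<forall>y\<in>P. omega_le y x \<longrightarrow> y \<in> T)"

definition hook :: "nat \<Rightarrow> nat \<Rightarrow> (nat \<times> nat) set" where
  "hook a b = {(a, l) | l. a < l \<and> l < b} \<union> {(j, b) | j. a < j \<and> j < b}"

definition is_k_diagram :: "nat \<Rightarrow> nat set \<Rightarrow> (nat \<times> nat) set \<Rightarrow> bool" where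
  "is_k_diagram n K S \<longleftrightarrow>
     S \<subseteq> Omega n \<and>
     (\<forall>i j. 1 \<le> i \<and> i < j \<and> j \<le> kd K \<longrightarrow> lower_ideal (S \<inter> Lambda n K i j) (Lambda n K i j)) \<and>
     (\<forall>(a, b) \<in> Omega n.
        (2 * card (hook a b \<inter> S) > card (hook a b) \<longrightarrow> (a, b) \<in> S) \<and>
        (2 * card (hook a b - S) > card (hook a b) \<longrightarrow> (a, b) \<notin> S))"

definition Snk :: "nat \<Rightarrow> nat set \<Rightarrow> (nat \<Rightarrow> nat) set" where
  "Snk n K = {w. w permutes {1..n} \<and> (\<forall>i. 1 \<le> i \<and> i < n \<and> w (Suc i) < w i \<longrightarrow> i \<in> K)}"

definition inv_set :: "nat \<Rightarrow> (nat \<Rightarrow> nat) \<Rightarrow> (nat \<times> nat) set" where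
  "inv_set n w = {(a, b) \<in> Omega n. w b < w a}"

end

theory Submission
  imports Defs
begin

lemma hook_card: "card (hook a b) = 2 * card {a<..<b}"
proof -
  have h: "hook a b = (\<lambda>l. (a,l)) ` {a<..<b} \<union> (\<lambda>j. (j,b)) ` {a<..<b}"
    unfolding hook_def by auto
  have d: "(\<lambda>l. (a,l)) ` {a<..<b} \<inter> (\<lambda>j. (j,b)) ` {a<..<b} = {}" by auto
  have "card (hook a b) = card ((\<lambda>l. (a,l)) ` {a<..<b}) + card ((\<lambda>j. (j,b)) ` {a<..<b})"
    unfolding h by (rule card_Un_disjoint) (use d in auto)
  also have "\<dots> = 2 * card {a<..<b}"
    by (simp add: card_image inj_on_def)
  finally show ?thesis .
qed

lemma mem_hook: "p \<in> hook a b \<longleftrightarrow> (fst p = a \<and> a < snd p \<and> snd p < b) \<or> (snd p = b \<and> a < fst p \<and> fst p < b)"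
  unfolding hook_def by (cases p) auto

lemma hook_half:
  assumes "\<And>l. a < l \<Longrightarrow> l < b \<Longrightarrow> \<not> ((a,l) \<in> T \<and> (l,b) \<in> T)"
  shows "2 * card (hook a b \<inter> T) \<le> card (hook a b)"
proof -
  define f where "f = (\<lambda>p::nat\<times>nat. if fst p = a then snd p else fst p)"
  have inj: "inj_on f (hook a b \<inter> T)"
  proof (rule inj_onI)
    fix p q assume p: "p \<in> hook a b \<inter> T" and q: "q \<in> hook a b \<inter> T" and e: "f p = f q"
    obtain p1 p2 where pp: "p = (p1,p2)" by (cases p)
    obtain q1 q2 where qq: "q = (q1,q2)" by (cases q)
    have hp: "(p1 = a \<and> a < p2 \<and> p2 < b) \<or> (p2 = b \<and> a < p1 \<and> p1 < b)" "(p1,p2) \<in> T"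
      using p pp mem_hook[of p] by auto
    have hq: "(q1 = a \<and> a < q2 \<and> q2 < b) \<or> (q2 = b \<and> a < q1 \<and> q1 < b)" "(q1,q2) \<in> T"
      using q qq mem_hook[of q] by auto
    have e': "(if p1 = a then p2 else p1) = (if q1 = a then q2 else q1)"
      using e unfolding pp qq f_def by (simp split: if_splits)
    show "p = q"
    proof (cases "p1 = a")
      case True
      show ?thesis
      proof (cases "q1 = a")
        case True
        thus ?thesis using \<open>p1 = a\<close> e' pp qq by simp
      next
        case False
        hence qb: "q2 = b" "a < q1" "q1 < b" using hq by auto
        have "p2 = q1" using e' True False by simp
        hence "(a,q1) \<in> T" using hp(2) True by simp
        moreover have "(q1,b) \<in> T" using hq(2) qb by simp
        ultimately show ?thesis using assms[of q1] qb by blast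
      qed
    next
      case False
      hence pb: "p2 = b" "a < p1" "p1 < b" using hp by auto
      show ?thesis
      proof (cases "q1 = a")
        case True
        hence "q2 = p1" using e' False by simp
        hence "(a,p1) \<in> T" using hq(2) True by simp
        moreover have "(p1,b) \<in> T" using hp(2) pb by simp
        ultimately show ?thesis using assms[of p1] pb by blast
      next
        case qF: False
        hence "q2 = b" using hq by auto
        moreover have "p1 = q1" using e' False qF by simp
        ultimately show ?thesis using pp qq pb by simp
      qed
    qed
  qed
  have sub: "f ` (hook a b \<inter> T) \<subseteq> {a<..<b}"
  proof
    fix x assume "x \<in> f ` (hook a b \<inter> T)"
    then obtain p where ph: "p \<in> hook a b" and xp: "x = f p" by blast
    obtain p1 p2 where pp: "p = (p1,p2)" by (cases p)
    have "(p1 = a \<and> a < p2 \<and> p2 < b) \<or> (p2 = b \<and> a < p1 \<and> p1 < b)"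
      using ph mem_hook[of p] pp by simp
    moreover have "x = (if p1 = a then p2 else p1)" using xp pp f_def by simp
    ultimately show "x \<in> {a<..<b}" by auto
  qed
  have "card (hook a b \<inter> T) \<le> card {a<..<b}"
    by (rule card_inj_on_le[OF inj sub]) simp
  thus ?thesis using hook_card[of a b] by simp
qed

lemma L_sorted:
  fixes n :: nat and K :: "nat set"
  assumes "K \<subseteq> {0<..<n}" and n0: "0 < n"
  shows "sorted_wrt (<) (0 # sorted_list_of_set K @ [n])"
proof -
  have fin: "finite K" using finite_subset[OF assms(1)] by simp
  have s: "sorted_wrt (<) (sorted_list_of_set K)" by simp
  have st: "set (sorted_list_of_set K) = K" using fin by simp
  have a1: "\<forall>x\<in>K. x < n" using assms by auto
  have a2: "\<forall>x\<in>K. 0 < x" using assms by auto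
  have "sorted_wrt (<) (sorted_list_of_set K @ [n])"
    unfolding sorted_wrt_append using s a1 st by simp
  moreover have "\<forall>x\<in>set (sorted_list_of_set K @ [n]). 0 < x"
    using a2 st n0 by auto
  ultimately show ?thesis by simp
qed

lemma not_in_K:
  assumes K: "K \<subseteq> {0<..<n}" and n0: "0 < n" and i: "1 \<le> i" "i \<le> kd K"
    and m: "kseq n K (i-1) < m" "m < kseq n K i"
  shows "m \<notin> K"
proof
  assume mK: "m \<in> K"
  let ?L = "0 # sorted_list_of_set K @ [n]"
  have fin: "finite K" using finite_subset[OF K] by simp
  have len: "length ?L = card K + 2" using fin by simp
  have srt: "sorted_wrt (<) ?L" using L_sorted[OF K n0] .
  have "m \<in> set ?L" using mK fin by simp
  then obtain p where p: "p < length ?L" "?L ! p = m" by (metis in_set_conv_nth)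
  have il: "i < length ?L" using i len unfolding kd_def by simp
  show False
  proof (cases "p \<le> i - 1")
    case True
    hence "?L ! p \<le> ?L ! (i-1)"
      using srt il by (metis le_eq_less_or_eq less_imp_diff_less sorted_wrt_nth_less)
    thus False using m p unfolding kseq_def by simp
  next
    case False
    hence "i \<le> p" by simp
    hence "?L ! i \<le> ?L ! p"
      using srt p by (metis le_eq_less_or_eq sorted_wrt_nth_less)
    thus False using m p unfolding kseq_def by simp
  qed
qed

lemma kseq_mono:
  assumes K: "K \<subseteq> {0<..<n}" and n0: "0 < n" and "i \<le> j" "j \<le> kd K"
  shows "kseq n K i \<le> kseq n K j"
proof -
  let ?L = "0 # sorted_list_of_set K @ [n]"
  have fin: "finite K" using finite_subset[OF K] by simp
  have len: "length ?L = card K + 2" using fin by simp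
  have srt: "sorted_wrt (<) ?L" using L_sorted[OF K n0] .
  have jl: "j < length ?L" using assms len unfolding kd_def by simp
  show ?thesis
  proof (cases "i = j")
    case False
    hence "i < j" using assms by simp
    hence "?L ! i < ?L ! j" using sorted_wrt_nth_less[OF srt _ jl] by blast
    thus ?thesis unfolding kseq_def by simp
  qed simp
qed

lemma kseq_last:
  assumes K: "K \<subseteq> {0<..<n}" and n0: "0 < n"
  shows "kseq n K (kd K) = n"
proof -
  have fin: "finite K" using finite_subset[OF K] by simp
  show ?thesis unfolding kseq_def kd_def using fin
    by (simp add: nth_append)
qed

lemma block_mono:
  fixes w :: "nat \<Rightarrow> nat"
  assumes K: "K \<subseteq> {0<..<n}" and n0: "0 < n" and i: "1 \<le> i" "i \<le> kd K"
    and desc: "\<And>m. 1 \<le> m \<Longrightarrow> m < n \<Longrightarrow> w (Suc m) < w m \<Longrightarrow> m \<in> K"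
    and x: "x \<in> kblock n K i" and y: "y \<in> kblock n K i" and xy: "x \<le> y"
  shows "w x \<le> w y"
  using xy y
proof (induction y rule: dec_induct)
  case base then show ?case by simp
next
  case (step m)
  have kn: "kseq n K i \<le> n"
    using kseq_mono[OF K n0 i(2) order_refl] kseq_last[OF K n0] by simp
  have m1: "kseq n K (i-1) < m" using x step(1) unfolding kblock_def by auto
  have m2: "m < kseq n K i" using step(2,4) unfolding kblock_def by auto
  have "m \<notin> K" using not_in_K[OF K n0 i m1 m2] .
  moreover have "1 \<le> m" using m1 by simp
  moreover have "m < n" using m2 kn by simp
  ultimately have "w m \<le> w (Suc m)" using desc by force
  moreover have "Suc m \<in> kblock n K i" using step(4) .
  moreover have "m \<in> kblock n K i" using m1 m2 unfolding kblock_def by auto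
  ultimately show ?case using step(3) by simp
qed

theorem claim2p4:
  fixes n :: nat and K :: "nat set" and w :: "nat \<Rightarrow> nat"
  assumes "K \<subseteq> {0<..<n}"
    and "w \<in> Snk n K"
  shows "is_k_diagram n K (inv_set n w)"
proof -
  have K: "K \<subseteq> {0<..<n}" by fact
  have desc: "\<And>m. 1 \<le> m \<Longrightarrow> m < n \<Longrightarrow> w (Suc m) < w m \<Longrightarrow> m \<in> K"
    using assms(2) unfolding Snk_def by auto
  let ?S = "inv_set n w"
  have A: "?S \<subseteq> Omega n" unfolding inv_set_def by auto
  have B: "lower_ideal (?S \<inter> Lambda n K i j) (Lambda n K i j)"
    if ij: "1 \<le> i" "i < j" "j \<le> kd K" for i j
  proof -
    have i': "i \<le> kd K" using ij by simp
    have j1: "1 \<le> j" using ij by simp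
    have n0: "0 < n"
    proof (rule ccontr)
      assume "\<not> 0 < n"
      hence "K = {}" using K by auto
      thus False using ij unfolding kd_def by simp
    qed
    have sub: "Lambda n K i j \<subseteq> Omega n"
    proof
      fix p assume "p \<in> Lambda n K i j"
      then obtain a b where p: "p = (a,b)" "a \<in> kblock n K i" "b \<in> kblock n K j"
        unfolding Lambda_def by auto
      have "kseq n K i \<le> kseq n K (j-1)" using kseq_mono[OF K n0, of i "j-1"] ij by simp
      moreover have "kseq n K j \<le> n" using kseq_mono[OF K n0 ij(3) order_refl] kseq_last[OF K n0] by simp
      ultimately show "p \<in> Omega n" using p unfolding kblock_def Omega_def by auto
    qed
    show ?thesis unfolding lower_ideal_def
    proof (intro conjI ballI impI)
      show "?S \<inter> Lambda n K i j \<subseteq> Lambda n K i j" by auto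
    next
      fix x y assume x: "x \<in> ?S \<inter> Lambda n K i j" and y: "y \<in> Lambda n K i j"
        and le: "omega_le y x"
      obtain a b where xab: "x = (a,b)" "a \<in> kblock n K i" "b \<in> kblock n K j"
        using x unfolding Lambda_def by auto
      obtain a' b' where yab: "y = (a',b')" "a' \<in> kblock n K i" "b' \<in> kblock n K j"
        using y unfolding Lambda_def by auto
      have "w b < w a" using x xab unfolding inv_set_def by auto
      moreover have "w a \<le> w a'"
        using block_mono[OF K n0 ij(1) i' desc xab(2) yab(2)] le xab yab unfolding omega_le_def by auto
      moreover have "w b' \<le> w b"
        using block_mono[OF K n0 j1 ij(3) desc yab(3) xab(3)] le xab yab unfolding omega_le_def by auto
      moreover have "y \<in> Omega n" using sub y by auto
      ultimately show "y \<in> ?S \<inter> Lambda n K i j" using y yab unfolding inv_set_def by auto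
    qed
  qed
  have C: "(2 * card (hook a b \<inter> ?S) > card (hook a b) \<longrightarrow> (a, b) \<in> ?S) \<and>
        (2 * card (hook a b - ?S) > card (hook a b) \<longrightarrow> (a, b) \<notin> ?S)"
    if ab: "(a,b) \<in> Omega n" for a b
  proof (intro conjI impI)
    assume c: "2 * card (hook a b \<inter> ?S) > card (hook a b)"
    show "(a,b) \<in> ?S"
    proof (rule ccontr)
      assume nab: "(a,b) \<notin> ?S"
      have "2 * card (hook a b \<inter> ?S) \<le> card (hook a b)"
        by (rule hook_half) (use ab nab in \<open>auto simp: inv_set_def Omega_def\<close>)
      thus False using c by simp
    qed
  next
    assume c: "2 * card (hook a b - ?S) > card (hook a b)"
    show "(a,b) \<notin> ?S"
    proof
      assume nab: "(a,b) \<in> ?S"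
      have "2 * card (hook a b \<inter> (- ?S)) \<le> card (hook a b)"
        by (rule hook_half) (use ab nab in \<open>auto simp: inv_set_def Omega_def\<close>)
      moreover have "hook a b \<inter> (- ?S) = hook a b - ?S" by auto
      ultimately show False using c by simp
    qed
  qed
  show ?thesis unfolding is_k_diagram_def using A B C by blast
qed

end
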